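(* Let $n\ge2$. (i) Let $P$ be an invertible $n\times n$ matrix over $\mathbb{F}_{q^2}$, $A=P(E_{11}+\cdots+E_{n-1,n-1})P^\ast$, and $\mathbf{x}=P(y_1,\ldots,y_n)^\top$ with $y_n\neq 0$, so that $\mathcal{L}=\{A+\lambda\mathbf{x}\mathbf{x}^\ast: 0\neq\lambda\in\mathbb{F}_q\}$ is a leaf of $A$. Put $\mathbf{z}:=\big(-y_1/y_n,\ldots,-y_{n-1}/y_n\big)^\top$. Then for every nonzero $\lambda\in\mathbb{F}_q$, $$(A+\lambda\mathbf{x}\mathbf{x}^\ast)^{-1}=(P^{-1})^\ast\begin{bmatrix}I_{n-1}&\mathbf{z}\\ \mathbf{z}^\ast&\mathbf{z}^\ast\mathbf{z}+(\lambda y_n\bar y_n)^{-1}\end{bmatrix}P^{-1}.$$ If moreover $q\ge 3$, then $\mathcal{L}^{-1}:=\{(A+\lambda\mathbf{x}\mathbf{x}^\ast)^{-1}: 0\neq\lambda\in\mathbb{F}_q\}$ is the leaf of the matrix $N=(P^{-1})^\ast\begin{bmatrix}I_{n-1}&\mathbf{z}\\ \mathbf{z}^\ast&\mathbf{z}^\ast\mathbf{z}\end{bmatrix}P^{-1}$ generated by the vector $\mathbf{v}=(P^{-1})^\ast\mathbf{e}_n$, i.e. $\mathcal{L}^{-1}=\{N+\mu\mathbf{v}\mathbf{v}^\ast: 0\ne\mu\in\mathbb{F}_q\}$, where $\mathbf{e}_n=(0,\ldots,0,1)^\top$. (ii) Let $D$ be an invertible $(n-1)\times(n-1)$ hermitian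 matrix, $\mathbf{w}\in\mathbb{F}_{q^2}^{n-1}$ and $\mu\in\mathbb{F}_q$. Then $\begin{bmatrix}\mu&\mathbf{w}^\ast\\ \mathbf{w}&D\end{bmatrix}$ is invertible if and only if $\mu\neq\mathbf{w}^\ast D^{-1}\mathbf{w}$, in which case $$\begin{bmatrix}\mu&\mathbf{w}^\ast\\ \mathbf{w}&D\end{bmatrix}^{-1}=\begin{bmatrix}0&0\\0&D^{-1}\end{bmatrix}+\frac{1}{\mu-\mathbf{w}^\ast D^{-1}\mathbf{w}}\begin{bmatrix}-1\\ D^{-1}\mathbf{w}\end{bmatrix}\begin{bmatrix}-1\\ D^{-1}\mathbf{w}\end{bmatrix}^\ast.$$
   Context: $\mathbb{F}_{q^2}$ is the field with $q^2$ elements with involution $\bar x=x^q$, fixed field $\mathbb{F}_q$; $X^\ast=\bar X^\top$; hermitian means $A^\ast=A$. $E_{ii}$ is the matrix unit with $1$ in position $(i,i)$. Leaf: if $A$ is an $n\times n$ hermitian matrix of rank $s<n$ and $\mathbf{x}$ is not in the column space of $A$, then $\{A+\lambda\mathbf{x}\mathbf{x}^\ast: 0\ne\lambda\in\mathbb{F}_q\}$ is the leaf of $A$ generated by $\mathbf{x}$. *)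

theory Defs
  imports "Jordan_Normal_Form.Matrix" "Jordan_Normal_Form.DL_Rank"
begin

text \<open>The field F_{q^2} is a finite field type 'a with CARD('a) = q^2.
  Involution: bar x = x^q.  Vectors are represented as column matrices (k x 1).\<close>

definition hconj :: "nat \<Rightarrow> 'a::field \<Rightarrow> 'a" where
  "hconj q x = x ^ q"

definition Fq :: "nat \<Rightarrow> 'a::field set" where
  "Fq q = {x. hconj q x = x}"

definition mstar :: "nat \<Rightarrow> 'a::field mat \<Rightarrow> 'a mat" where
  "mstar q X = transpose_mat (map_mat (hconj q) X)"

definition hermitian :: "nat \<Rightarrow> 'a::field mat \<Rightarrow> bool" where
  "hermitian q A \<longleftrightarrow> mstar q A = A"

text \<open>Matrix inverse (meaningful for invertible square matrices).\<close>
definition minv :: "'a::field mat \<Rightarrow> 'a mat" where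
  "minv A = (SOME B. inverts_mat A B \<and> inverts_mat B A)"

definition leaf :: "nat \<Rightarrow> 'a::field mat \<Rightarrow> 'a mat \<Rightarrow> 'a mat set" where
  "leaf q A x = {A + lam \<cdot>\<^sub>m (x * mstar q x) | lam. lam \<in> Fq q \<and> lam \<noteq> 0}"

definition is_leaf :: "nat \<Rightarrow> nat \<Rightarrow> 'a::field mat \<Rightarrow> 'a mat \<Rightarrow> 'a mat set \<Rightarrow> bool" where
  "is_leaf q n A x L \<longleftrightarrow>
     A \<in> carrier_mat n n \<and> hermitian q A \<and> vec_space.rank n A < n \<and>
     x \<in> carrier_mat n 1 \<and> \<not> (\<exists>c \<in> carrier_mat n 1. A * c = x) \<and>
     L = leaf q A x"

end

theory Submission
  imports Defs "HOL-Algebra.Sylow" "HOL-Algebra.Multiplicative_Group" "HOL-Computational_Algebra.Primes"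
begin

lemma prime_dvd_card_char:
  fixes r :: nat
  assumes r: "prime r" and d: "r dvd card (UNIV :: 'a::{field,finite} set)"
  shows "of_nat r = (0::'a)"
proof -
  define G where "G = \<lparr>carrier = (UNIV :: 'a set), monoid.mult = (+), one = (0::'a)\<rparr>"
  have grp: "group G"
    unfolding G_def
    by (rule groupI) (auto simp: add.assoc intro: exI[of _ "- _"])
  interpret group G by (rule grp)
  have powG: "\<And>x k. x [^]\<^bsub>G\<^esub> (k::nat) = of_nat k * x"
  proof -
    fix x :: 'a and k :: nat
    show "x [^]\<^bsub>G\<^esub> k = of_nat k * x"
      by (induction k) (auto simp: G_def distrib_right)
  qed
  obtain m where om: "Coset.order G = r ^ 1 * m"
    using d unfolding Coset.order_def G_def by auto
  obtain H where H: "subgroup H G" "card H = r ^ 1"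
    using sylow_thm[OF r grp om] unfolding G_def Coset.order_def by auto
  have r2: "r \<ge> 2" using r prime_ge_2_nat by blast
  have "card H \<ge> 2" using H r2 by simp
  have "\<exists>h \<in> H. h \<noteq> 0"
  proof (rule ccontr)
    assume "\<not> (\<exists>h \<in> H. h \<noteq> 0)"
    then have "H \<subseteq> {0}" by auto
    then have "card H \<le> 1" using card_mono[of "{0}" H] by simp
    then show False using \<open>card H \<ge> 2\<close> by simp
  qed
  then obtain h where h: "h \<in> H" "h \<noteq> 0" by auto
  interpret Hg: group "G\<lparr>carrier := H\<rparr>" by (rule subgroup.subgroup_is_group[OF H(1) grp])
  have "h [^]\<^bsub>G\<lparr>carrier := H\<rparr>\<^esub> Coset.order (G\<lparr>carrier := H\<rparr>) = \<one>\<^bsub>G\<lparr>carrier := H\<rparr>\<^esub>"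
    by (rule Hg.pow_order_eq_1) (simp add: h)
  moreover have "Coset.order (G\<lparr>carrier := H\<rparr>) = r" using H by (simp add: Coset.order_def)
  moreover have "\<And>k. h [^]\<^bsub>G\<lparr>carrier := H\<rparr>\<^esub> (k::nat) = h [^]\<^bsub>G\<^esub> k"
    by (simp add: nat_pow_def)
  ultimately have "of_nat r * h = 0" using powG by (simp add: G_def)
  then show ?thesis using h by simp
qed

lemma prime_CHAR_fin: "prime CHAR('a::{field,finite})"
  by (rule prime_CHAR_semidom) (rule finite_imp_CHAR_pos, simp)

lemma all_prime_factors_pow:
  fixes p :: nat
  assumes "q > 0" "\<And>r. prime r \<Longrightarrow> r dvd q \<Longrightarrow> r = p"
  shows "\<exists>k. q = p ^ k"
  using assms
proof (induction q rule: less_induct)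
  case (less q)
  show ?case
  proof (cases "q = 1")
    case True then show ?thesis by (intro exI[of _ 0]) simp
  next
    case False
    then obtain r where r: "prime r" "r dvd q" using prime_factor_nat by blast
    then have rp: "r = p" using less.prems by blast
    then obtain q' where q': "q = p * q'" using r by (auto elim: dvdE)
    have p2: "p \<ge> 2" using r rp prime_ge_2_nat by blast
    have "q' > 0" using less.prems q' by (cases q') auto
    have "q' < q" using q' p2 \<open>q' > 0\<close> by simp
    moreover have "\<And>r. prime r \<Longrightarrow> r dvd q' \<Longrightarrow> r = p"
      using less.prems(2) q' by (metis dvd_mult)
    ultimately obtain k where "q' = p ^ k" using less.IH \<open>q' > 0\<close> by blast
    then show ?thesis using q' by (intro exI[of _ "Suc k"]) simp
  qed
qed

lemma q_pow_char:
  assumes card: "card (UNIV :: 'a::{field,finite} set) = q ^ 2"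
  shows "\<exists>k. q = CHAR('a) ^ k"
proof (rule all_prime_factors_pow)
  have "card (UNIV :: 'a set) > 0" by (simp add: finite_UNIV_card_ge_0)
  then show "q > 0" using card by (cases q) auto
next
  fix r assume r: "prime r" "r dvd q"
  then have "r dvd card (UNIV :: 'a set)" using card by (simp add: power2_eq_square)
  then have "of_nat r = (0::'a)" using prime_dvd_card_char r by blast
  then have "CHAR('a) dvd r" by (simp add: of_nat_eq_0_iff_char_dvd)
  then show "r = CHAR('a)" using r prime_CHAR_fin[where 'a='a]
    by (metis primes_dvd_imp_eq)
qed

lemma fin_field_pow_card:
  fixes x :: "'a :: {field,finite}"
  shows   "x ^ card (UNIV :: 'a set) = x"
proof (cases "x = 0")
  case False
  have "x * (\<Prod>y\<in>UNIV-{0}. x * y) = x * x ^ (card (UNIV :: 'a set) - 1) * \<Prod>(UNIV-{0})"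
    by (simp add: prod.distrib mult_ac)
  also have "x * x ^ (card (UNIV :: 'a set) - 1) = x ^ Suc (card (UNIV :: 'a set) - 1)"
    by (subst power_Suc) auto
  also have "Suc (card (UNIV :: 'a set) - 1) = card (UNIV :: 'a set)"
    using finite_UNIV_card_ge_0[where ?'a = 'a] by simp
  also have "(\<Prod>y\<in>UNIV-{0}. x * y) = (\<Prod>y\<in>UNIV-{0}. y)"
    by (rule prod.reindex_bij_witness[of _ "\<lambda>y. y / x" "\<lambda>y. x * y"]) (use False in auto)
  finally show ?thesis
    by simp
qed (use finite_UNIV_card_ge_0[where ?'a = 'a] in auto)

lemma mstar_dims[simp]: "dim_row (mstar q A) = dim_col A" "dim_col (mstar q A) = dim_row A"
  by (simp_all add: mstar_def)

lemma mstar_index[simp]: "i < dim_col A \<Longrightarrow> j < dim_row A \<Longrightarrow> mstar q A $$ (i,j) = hconj q (A $$ (j,i))"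
  by (simp add: mstar_def)

lemma mstar_carrier[simp]: "A \<in> carrier_mat m n \<Longrightarrow> mstar q (A::'a::field mat) \<in> carrier_mat n m"
  unfolding carrier_mat_def mstar_def by simp

context
  fixes q :: nat
  assumes card: "card (UNIV :: 'a::{field,finite} set) = q ^ 2"
begin

lemma q_pos: "q > 0"
proof -
  have "card (UNIV :: 'a set) > 0" by (simp add: finite_UNIV_card_ge_0)
  then show "q > 0" using card by (cases q) auto
qed

lemma hconj_add: "hconj q (x + y :: 'a) = hconj q x + hconj q y"
proof -
  obtain k where k: "q = CHAR('a) ^ k" using q_pow_char[OF card] by blast
  show ?thesis unfolding hconj_def
    by (rule freshmans_dream'[OF prime_CHAR_fin k])
qed

lemma hconj_0[simp]: "hconj q (0::'a) = 0" using q_pos by (simp add: hconj_def)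

lemma hconj_sum: "hconj q (sum f A :: 'a) = sum (\<lambda>i. hconj q (f i)) A"
  by (induction A rule: infinite_finite_induct) (simp_all add: hconj_add)

lemma hconj_mult: "hconj q (x * y :: 'a) = hconj q x * hconj q y"
  by (simp add: hconj_def power_mult_distrib)

lemma hconj_1[simp]: "hconj q (1::'a) = 1" by (simp add: hconj_def)

lemma hconj_uminus: "hconj q (- x :: 'a) = - hconj q x"
proof -
  have "hconj q (- x) + hconj q x = 0" by (simp flip: hconj_add)
  then show ?thesis by (simp add: eq_neg_iff_add_eq_0)
qed

lemma hconj_minus: "hconj q (x - y :: 'a) = hconj q x - hconj q y"
  using hconj_add[of x "-y"] by (simp add: hconj_uminus)

lemma hconj_inverse: "hconj q (inverse x :: 'a) = inverse (hconj q x)"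
  by (simp add: hconj_def power_inverse)

lemma hconj_divide: "hconj q (x / y :: 'a) = hconj q x / hconj q y"
  by (simp add: hconj_def power_divide)

lemma hconj_hconj[simp]: "hconj q (hconj q (x :: 'a)) = x"
  using fin_field_pow_card[of x] card by (simp add: hconj_def flip: power_mult) (simp add: power2_eq_square)

lemma hconj_eq_0_iff[simp]: "hconj q (x :: 'a) = 0 \<longleftrightarrow> x = 0"
  by (metis hconj_0 hconj_hconj)

lemma mstar_mult: "mstar q (A * (B :: 'a mat)) = mstar q B * mstar q A"
  if "A \<in> carrier_mat m k" "B \<in> carrier_mat k n"
proof (rule eq_matI)
  fix i j assume "i < dim_row (mstar q B * mstar q A)" "j < dim_col (mstar q B * mstar q A)"
  then have i: "i < n" and j: "j < m" using that by auto
  have "mstar q (A*B) $$ (i,j) = hconj q (\<Sum>l \<in> {0..<k}. A$$(j,l) * B$$(l,i))"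
    using that i j by (simp add: scalar_prod_def)
  also have "\<dots> = (\<Sum>l \<in> {0..<k}. hconj q (B$$(l,i)) * hconj q (A$$(j,l)))"
    by (simp add: hconj_sum hconj_mult mult.commute)
  also have "\<dots> = (mstar q B * mstar q A)$$(i,j)" using that i j by (simp add: scalar_prod_def)
  finally show "mstar q (A*B) $$ (i,j) = (mstar q B * mstar q A)$$(i,j)" .
qed (use that in auto)

lemma mstar_add: "A \<in> carrier_mat m n \<Longrightarrow> B \<in> carrier_mat m n \<Longrightarrow>
    mstar q (A + (B :: 'a mat)) = mstar q A + mstar q B"
  by (rule eq_matI) (auto simp: hconj_add)

lemma mstar_smult: "mstar q (c \<cdot>\<^sub>m (A :: 'a mat)) = hconj q c \<cdot>\<^sub>m mstar q A"
  by (rule eq_matI) (auto simp: hconj_mult)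

lemma mstar_mstar[simp]: "mstar q (mstar q (A :: 'a mat)) = A"
  by (rule eq_matI) auto

lemma mstar_one[simp]: "mstar q (1\<^sub>m n :: 'a mat) = 1\<^sub>m n"
  by (rule eq_matI) auto

lemma mstar_zero[simp]: "mstar q (0\<^sub>m m n :: 'a mat) = 0\<^sub>m n m"
  by (rule eq_matI) auto

lemma mstar_mat: "mstar q (mat m n f :: 'a mat) = mat n m (\<lambda>(i,j). hconj q (f (j,i)))"
  by (rule eq_matI) auto

lemma mstar_four_block: assumes "A \<in> carrier_mat nr1 nc1" "B \<in> carrier_mat nr1 nc2"
  "C \<in> carrier_mat nr2 nc1" "D \<in> carrier_mat nr2 nc2"
  shows "mstar q (four_block_mat A B C (D :: 'a mat)) = four_block_mat (mstar q A) (mstar q C) (mstar q B) (mstar q D)"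
  by (rule eq_matI) (use assms in auto)

end

lemma minv_eq: assumes A: "A \<in> carrier_mat n n" and B: "B \<in> carrier_mat n n" and AB: "A * B = 1\<^sub>m n"
  shows "minv A = (B :: 'a :: field mat)"
proof -
  have BA: "B * A = 1\<^sub>m n" by (rule mat_mult_left_right_inverse[OF A B AB])
  have ex: "inverts_mat A B \<and> inverts_mat B A" using A B AB BA by (simp add: inverts_mat_def)
  have uniq: "B' = B" if "inverts_mat A B' \<and> inverts_mat B' A" for B'
  proof -
    from that have 1: "A * B' = 1\<^sub>m n" "B' * A = 1\<^sub>m (dim_row B')" using A by (auto simp: inverts_mat_def)
    have c: "dim_col B' = n" using arg_cong[OF 1(1), of dim_col] by simp
    have r: "dim_row B' = n" using arg_cong[OF 1(2), of dim_col] A by simp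
    have B': "B' \<in> carrier_mat n n" using c r by auto
    have "B' = B' * (A * B)" using AB B' by simp
    also have "\<dots> = (B' * A) * B" using A B B' by (simp add: assoc_mult_mat)
    also have "\<dots> = B" using 1(2) r B by simp
    finally show ?thesis .
  qed
  show ?thesis unfolding minv_def using ex uniq by (rule some_equality)
qed

lemma minv_props: assumes A: "A \<in> carrier_mat n n" and inv: "invertible_mat (A :: 'a :: field mat)"
  shows "minv A \<in> carrier_mat n n" "A * minv A = 1\<^sub>m n" "minv A * A = 1\<^sub>m n"
proof -
  obtain B where B: "inverts_mat A B" "inverts_mat B A" using inv unfolding invertible_mat_def by blast
  from B have 1: "A * B = 1\<^sub>m n" "B * A = 1\<^sub>m (dim_row B)" using A by (auto simp: inverts_mat_def)
  have c: "dim_col B = n" using arg_cong[OF 1(1), of dim_col] by simp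
  have r: "dim_row B = n" using arg_cong[OF 1(2), of dim_col] A by simp
  have Bc: "B \<in> carrier_mat n n" using c r by auto
  have "minv A = B" by (rule minv_eq[OF A Bc 1(1)])
  then show "minv A \<in> carrier_mat n n" "A * minv A = 1\<^sub>m n" "minv A * A = 1\<^sub>m n" using 1 Bc r by auto
qed


lemma idx_mult: assumes "A \<in> carrier_mat nr k" "B \<in> carrier_mat k nc" "i < nr" "j < nc"
  shows "(A * B) $$ (i,j) = (\<Sum>l\<in>{0..<k}. A $$ (i,l) * B $$ (l,j))"
  using assms by (auto simp: scalar_prod_def)
context
  fixes q :: nat
  assumes card: "card (UNIV :: 'a::{field,finite} set) = q ^ 2"
begin

lemma part1:
  fixes P Y :: "'a mat" and n :: nat
  assumes n1: "n \<ge> 1" and P: "P \<in> carrier_mat n n" and Pinv: "invertible_mat P"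
    and Y: "Y \<in> carrier_mat n 1" and yn0: "Y $$ (n - 1, 0) \<noteq> 0"
  defines "E \<equiv> mat n n (\<lambda>(i, j). if i = j \<and> i < n - 1 then 1 else 0)"
    and "yn \<equiv> Y $$ (n - 1, 0)"
  defines "z \<equiv> mat (n - 1) 1 (\<lambda>(i, j). - (Y $$ (i, 0)) / yn)"
  shows "(\<forall>lam \<in> Fq q. lam \<noteq> 0 \<longrightarrow>
              minv (P * E * mstar q P + lam \<cdot>\<^sub>m (P * Y * mstar q (P * Y))) =
                mstar q (minv P) *
                four_block_mat (1\<^sub>m (n - 1)) z (mstar q z)
                  (mstar q z * z + inverse (lam * yn * hconj q yn) \<cdot>\<^sub>m 1\<^sub>m 1)
                * minv P)
           \<and> (q \<ge> 3 \<longrightarrow>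
                is_leaf q n (mstar q (minv P) * four_block_mat (1\<^sub>m (n - 1)) z (mstar q z) (mstar q z * z)
                  * minv P) (mstar q (minv P) * mat n 1 (\<lambda>(i, j). if i = n - 1 then 1 else 0))
                 {minv (P * E * mstar q P + lam \<cdot>\<^sub>m (P * Y * mstar q (P * Y))) | lam. lam \<in> Fq q \<and> lam \<noteq> 0})"
proof -
  obtain m where n: "n = Suc m" using n1 by (cases n) auto
  have nm: "n - 1 = m" using n by simp
  define Q where "Q = minv P"
  define mQ where "mQ = mstar q Q"
  define mP where "mP = mstar q P"
  have Qc: "Q \<in> carrier_mat n n" and PQ: "P * Q = 1\<^sub>m n" and QP: "Q * P = 1\<^sub>m n"
    using minv_props[OF P Pinv] by (auto simp: Q_def)
  have mQc: "mQ \<in> carrier_mat n n" unfolding mQ_def using Qc by simp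
  have mPc: "mP \<in> carrier_mat n n" unfolding mP_def using P by simp
  have mPmQ: "mP * mQ = 1\<^sub>m n"
    using mstar_mult[OF card Qc P] QP by (simp add: mP_def mQ_def mstar_one[OF card])
  have mQmP: "mQ * mP = 1\<^sub>m n"
    using mstar_mult[OF card P Qc] PQ by (simp add: mP_def mQ_def mstar_one[OF card])
  have mmQ: "mstar q mQ = Q" unfolding mQ_def by (simp add: mstar_mstar[OF card])
  define y where "y = (\<lambda>k. Y $$ (k, 0))"
  define zf where "zf = (\<lambda>k. - y k / yn)"
  have yn: "yn = y m" unfolding yn_def y_def nm ..
  have yn0': "yn \<noteq> 0" using yn0 unfolding yn_def .
  have yk: "y k = - yn * zf k" for k using yn0' by (simp add: zf_def)
  have hyk: "hconj q (y k) = - hconj q yn * hconj q (zf k)" for k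
    by (simp add: yk hconj_mult[OF card] hconj_uminus[OF card])
  have zc: "z \<in> carrier_mat m 1" unfolding z_def nm by simp
  have zidx: "i < m \<Longrightarrow> z $$ (i, 0) = zf i" for i unfolding z_def nm zf_def y_def by simp
  define S where "S = (\<Sum>l\<in>{0..<m}. hconj q (zf l) * zf l)"
  have zz: "mstar q z * z = mat 1 1 (\<lambda>_. S)"
    by (rule eq_matI) (use zc in \<open>auto simp: scalar_prod_def S_def zidx\<close>)
  have zzc: "mstar q z * z \<in> carrier_mat 1 1" using mult_carrier_mat[OF mstar_carrier[OF zc] zc] .
  define N0 where "N0 = four_block_mat (1\<^sub>m m) z (mstar q z) (mstar q z * z)"
  have N0c: "N0 \<in> carrier_mat n n" unfolding N0_def n
    using four_block_carrier_mat[OF one_carrier_mat[of m] zzc, of z "mstar q z"] by simp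
  define nf where "nf = (\<lambda>i j. if i < m then (if j < m then (if i = j then 1 else 0) else zf i)
      else (if j < m then hconj q (zf j) else S))"
  have N0idx: "i < n \<Longrightarrow> j < n \<Longrightarrow> N0 $$ (i,j) = nf i j" for i j
    unfolding N0_def nf_def zz using zc n by (auto simp: zidx)
  define en where "en = mat n 1 (\<lambda>(i, j). if i = m then 1 else (0::'a))"
  have enc: "en \<in> carrier_mat n 1" unfolding en_def by simp
  define EE where "EE = en * mstar q en"
  have EEc: "EE \<in> carrier_mat n n" unfolding EE_def using enc by simp
  have EEidx: "i < n \<Longrightarrow> j < n \<Longrightarrow> EE $$ (i,j) = (if i = m \<and> j = m then 1 else 0)" for i j
    unfolding EE_def en_def by (auto simp: scalar_prod_def hconj_1[OF card] hconj_0[OF card])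
  define K where "K = (\<lambda>c. four_block_mat (1\<^sub>m m) z (mstar q z) (mstar q z * z + c \<cdot>\<^sub>m 1\<^sub>m 1))"
  have Kdec: "K c = N0 + c \<cdot>\<^sub>m EE" for c
  proof (rule eq_matI)
    fix i j assume "i < dim_row (N0 + c \<cdot>\<^sub>m EE)" "j < dim_col (N0 + c \<cdot>\<^sub>m EE)"
    then have ij: "i < n" "j < n" using N0c EEc by auto
    show "K c $$ (i,j) = (N0 + c \<cdot>\<^sub>m EE) $$ (i,j)"
      using ij N0c EEc N0idx[OF ij] EEidx[OF ij] zc n
      unfolding K_def nf_def zz by (auto simp: zidx)
  qed (use N0c EEc zc n in \<open>auto simp: K_def zz\<close>)
  have Kc: "K c \<in> carrier_mat n n" for c unfolding Kdec using N0c EEc by simp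
  have Kidx: "i < n \<Longrightarrow> j < n \<Longrightarrow> K c $$ (i,j) = nf i j + (if i = m \<and> j = m then c else 0)" for i j c
    unfolding Kdec using N0c EEc N0idx EEidx by simp
  define G where "G = (\<lambda>lam. E + lam \<cdot>\<^sub>m (Y * mstar q Y))"
  have Gc: "G lam \<in> carrier_mat n n" for lam unfolding G_def E_def using Y by simp
  have Gidx: "i < n \<Longrightarrow> k < n \<Longrightarrow> G lam $$ (i,k) = (if i = k \<and> i < m then 1 else 0) + lam * (y i * hconj q (y k))" for i k lam
    unfolding G_def E_def y_def nm using Y by (auto simp: scalar_prod_def)
  have GK: "G lam * K (inverse (lam * yn * hconj q yn)) = 1\<^sub>m n" if lam0: "lam \<noteq> 0" for lam
  proof (rule eq_matI)
    define c where "c = inverse (lam * yn * hconj q yn)"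
    define kf where "kf = (\<lambda>k j. nf k j + (if k = m \<and> j = m then c else 0))"
    have hyn0: "hconj q yn \<noteq> 0" using yn0' hconj_eq_0_iff[OF card] by simp
    fix i j assume "i < dim_row (1\<^sub>m n :: 'a mat)" "j < dim_col (1\<^sub>m n :: 'a mat)"
    then have i: "i < n" and j: "j < n" by auto
    have "(G lam * K c) $$ (i,j) = (\<Sum>k\<in>{0..<n}. G lam $$ (i,k) * K c $$ (k,j))"
      by (rule idx_mult[OF Gc Kc i j])
    also have "\<dots> = (\<Sum>k\<in>{0..<n}. (if i = k \<and> i < m then 1 else 0) * kf k j)
        + lam * y i * (\<Sum>k\<in>{0..<n}. hconj q (y k) * kf k j)"
      using i j by (simp add: Gidx Kidx kf_def algebra_simps sum.distrib sum_distrib_left)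
    also have "(\<Sum>k\<in>{0..<n}. (if i = k \<and> i < m then 1 else 0) * kf k j) = (if i < m then kf i j else 0)"
      using i by (simp add: if_distrib[where f = "\<lambda>x. x * _"] sum.delta cong: if_cong)
    also have "(\<Sum>k\<in>{0..<n}. hconj q (y k) * kf k j) = (if j = m then hconj q yn * c else 0)"
    proof -
      have "(\<Sum>k\<in>{0..<n}. hconj q (y k) * kf k j) = (\<Sum>k\<in>{0..<m}. hconj q (y k) * kf k j) + hconj q yn * kf m j"
        unfolding n by (simp add: yn)
      also have "(\<Sum>k\<in>{0..<m}. hconj q (y k) * kf k j) = - hconj q yn * (\<Sum>k\<in>{0..<m}. hconj q (zf k) * nf k j)"
        by (simp add: hyk kf_def sum_distrib_left algebra_simps)
      finally show ?thesis
        using j n by (auto simp: nf_def kf_def S_def if_distrib[where f = "\<lambda>x. _ * x"] sum.delta algebra_simps cong: if_cong)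
    qed
    finally have GKij: "(G lam * K c) $$ (i,j) = (if i < m then kf i j else 0) + lam * y i * (if j = m then hconj q yn * c else 0)" .
    have lc: "lam * y i * (hconj q yn * c) = y i / yn"
      using lam0 yn0' hyn0 by (simp add: c_def field_simps)
    have ym: "y m / yn = 1" using yn yn0' by simp
    show "(G lam * K c) $$ (i,j) = 1\<^sub>m n $$ (i,j)"
    proof (cases "i < m")
      case True
      then show ?thesis using i j n lc yn0' unfolding GKij
        by (cases "j < m") (auto simp: kf_def nf_def zf_def)
    next
      case False
      then have im: "i = m" using i n by simp
      then show ?thesis using j n lc ym unfolding GKij by (cases "j < m") (auto simp: kf_def nf_def)
    qed
  qed (use Gc Kc in auto)
  have Ec: "E \<in> carrier_mat n n" unfolding E_def by simp
  have YYc: "Y * mstar q Y \<in> carrier_mat n n" using mult_carrier_mat[OF Y mstar_carrier[OF Y]] .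
  have Aeq: "P * E * mstar q P + lam \<cdot>\<^sub>m (P * Y * mstar q (P * Y)) = P * G lam * mP" for lam
  proof -
    have "P * G lam * mP = (P * E + lam \<cdot>\<^sub>m (P * (Y * mstar q Y))) * mP"
      using mult_add_distrib_mat[OF P Ec smult_carrier_mat[OF YYc]] mult_smult_distrib[OF P YYc]
      by (simp add: G_def)
    also have "\<dots> = P * E * mP + lam \<cdot>\<^sub>m (P * (Y * mstar q Y) * mP)"
      using add_mult_distrib_mat[OF mult_carrier_mat[OF P Ec] smult_carrier_mat[OF mult_carrier_mat[OF P YYc]] mPc]
        mult_smult_assoc_mat[OF mult_carrier_mat[OF P YYc] mPc] by simp
    also have "P * (Y * mstar q Y) * mP = P * Y * mstar q (P * Y)"
      unfolding mstar_mult[OF card P Y] mP_def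
      by (simp only: assoc_mult_mat[OF P Y mstar_carrier[OF Y], symmetric]
          assoc_mult_mat[OF mult_carrier_mat[OF P Y] mstar_carrier[OF Y] mstar_carrier[OF P]])
    finally show ?thesis by (simp add: mP_def)
  qed
  have inv1: "minv (P * G lam * mP) = mQ * K (inverse (lam * yn * hconj q yn)) * Q" if lam0: "lam \<noteq> 0" for lam
  proof (rule minv_eq)
    let ?K = "K (inverse (lam * yn * hconj q yn))"
    have GKc: "?K \<in> carrier_mat n n" by (rule Kc)
    have PG: "P * G lam \<in> carrier_mat n n" using P Gc by simp
    have PGm: "P * G lam * mP \<in> carrier_mat n n" using PG mPc by simp
    have "P * G lam * mP * (mQ * ?K * Q) = P * G lam * mP * (mQ * ?K) * Q"
      by (rule assoc_mult_mat[OF PGm mult_carrier_mat[OF mQc GKc] Qc, symmetric])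
    also have "P * G lam * mP * (mQ * ?K) = P * G lam * mP * mQ * ?K"
      by (rule assoc_mult_mat[OF PGm mQc GKc, symmetric])
    also have "P * G lam * mP * mQ = P * G lam"
      using assoc_mult_mat[OF PG mPc mQc] mPmQ right_mult_one_mat[OF PG] by simp
    also have "P * G lam * ?K = P * (G lam * ?K)" by (rule assoc_mult_mat[OF P Gc GKc])
    also have "\<dots> = P" using GK[OF lam0] right_mult_one_mat[OF P] by simp
    finally show "P * G lam * mP * (mQ * ?K * Q) = 1\<^sub>m n" using PQ by simp
  qed (use P Gc mPc mQc Kc Qc in auto)
  have part_a: "minv (P * E * mstar q P + lam \<cdot>\<^sub>m (P * Y * mstar q (P * Y))) = mQ * K (inverse (lam * yn * hconj q yn)) * Q"
    if "lam \<noteq> 0" for lam using inv1[OF that] Aeq by simp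
  define N where "N = mQ * N0 * Q"
  define v where "v = mQ * en"
  have Nc: "N \<in> carrier_mat n n" unfolding N_def using mQc N0c Qc by simp
  have vc: "v \<in> carrier_mat n 1" unfolding v_def using mQc enc by simp
  have hS: "hconj q S = S" unfolding S_def
    by (simp add: hconj_sum[OF card] hconj_mult[OF card] hconj_hconj[OF card] mult.commute)
  have N0h: "mstar q N0 = N0"
  proof (rule eq_matI)
    fix i j assume "i < dim_row N0" "j < dim_col N0"
    then have ij: "i < n" "j < n" using N0c by auto
    show "mstar q N0 $$ (i,j) = N0 $$ (i,j)"
      using ij N0c N0idx[OF ij] N0idx[of j i] by (auto simp: nf_def hS hconj_hconj[OF card] hconj_1[OF card] hconj_0[OF card])
  qed (use N0c in auto)
  have Nh: "hermitian q N"
  proof -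
    have "mstar q N = mstar q Q * mstar q (mQ * N0)"
      unfolding N_def by (rule mstar_mult[OF card mult_carrier_mat[OF mQc N0c] Qc])
    also have "mstar q (mQ * N0) = N0 * Q" using mstar_mult[OF card mQc N0c] N0h mmQ by simp
    finally show ?thesis unfolding hermitian_def N_def using assoc_mult_mat[OF mQc N0c Qc] by (simp add: mQ_def)
  qed
  have detN0: "det N0 = 0"
  proof -
    define kv where "kv = vec n (\<lambda>i. if i < m then zf i else - 1)"
    have kvc: "kv \<in> carrier_vec n" unfolding kv_def by simp
    have kv0: "kv \<noteq> 0\<^sub>v n"
    proof
      assume "kv = 0\<^sub>v n"
      then have "kv $ m = 0" using n by simp
      then show False unfolding kv_def using n by simp
    qed
    have "N0 *\<^sub>v kv = 0\<^sub>v n"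
    proof (rule eq_vecI)
      fix i assume "i < dim_vec (0\<^sub>v n :: 'a vec)"
      then have i: "i < n" by simp
      have "(N0 *\<^sub>v kv) $ i = (\<Sum>k\<in>{0..<n}. N0 $$ (i,k) * kv $ k)"
        using i N0c kvc by (simp add: scalar_prod_def)
      also have "\<dots> = (\<Sum>k\<in>{0..<m}. nf i k * zf k) - nf i m"
        unfolding n using i n by (simp add: N0idx kv_def)
      also have "\<dots> = 0"
        using i n by (cases "i < m") (auto simp: nf_def S_def if_distrib[where f = "\<lambda>x. x * _"] sum.delta cong: if_cong)
      finally show "(N0 *\<^sub>v kv) $ i = 0\<^sub>v n $ i" using i by simp
    qed (use N0c in simp)
    then show ?thesis using det_0_iff_vec_prod_zero_field[OF N0c] kvc kv0 by blast
  qed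
  have rankN: "vec_space.rank n N < n"
  proof -
    have "det N = det mQ * det N0 * det Q"
      unfolding N_def using det_mult[OF mult_carrier_mat[OF mQc N0c] Qc] det_mult[OF mQc N0c] by simp
    then have "det N = 0" using detN0 by simp
    then have "vec_space.rank n N \<noteq> n" using vec_space.det_rank_iff[OF Nc] by blast
    moreover have "vec_space.rank n N \<le> n" by (rule vec_space.rank_le_nc[OF Nc])
    ultimately show ?thesis by simp
  qed
  have notcol: "\<not> (\<exists>c \<in> carrier_mat n 1. N * c = v)"
  proof
    assume "\<exists>c \<in> carrier_mat n 1. N * c = v"
    then obtain c where cc: "c \<in> carrier_mat n 1" and Ncv: "N * c = v" by blast
    define d where "d = Q * c"
    have dc: "d \<in> carrier_mat n 1" unfolding d_def using Qc cc by simp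
    have "mP * (N * c) = N0 * d"
    proof -
      have "N * c = mQ * (N0 * d)" unfolding N_def d_def
        by (simp only: assoc_mult_mat[OF mult_carrier_mat[OF mQc N0c] Qc cc]
            assoc_mult_mat[OF mQc N0c mult_carrier_mat[OF Qc cc]])
      then have "mP * (N * c) = (mP * mQ) * (N0 * d)"
        using assoc_mult_mat[OF mPc mQc mult_carrier_mat[OF N0c dc]] by simp
      then show ?thesis using mPmQ left_mult_one_mat[OF mult_carrier_mat[OF N0c dc]] by simp
    qed
    moreover have "mP * v = en" unfolding v_def using assoc_mult_mat[OF mPc mQc enc] mPmQ left_mult_one_mat[OF enc] by simp
    ultimately have N0d: "N0 * d = en" using Ncv by simp
    define dd where "dd = (\<lambda>l. d $$ (l, 0))"
    have rowi: "(N0 * d) $$ (i, 0) = (\<Sum>l\<in>{0..<m}. nf i l * dd l) + nf i m * dd m" if "i < n" for i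
      using idx_mult[OF N0c dc that, of 0] that unfolding n by (simp add: N0idx[unfolded n] dd_def)
    have dl: "dd l = - zf l * dd m" if "l < m" for l
    proof -
      have "(N0 * d) $$ (l, 0) = 0" using N0d that n by (simp add: en_def)
      moreover have "(N0 * d) $$ (l, 0) = dd l + zf l * dd m"
        using rowi[of l] that n by (simp add: nf_def if_distrib[where f = "\<lambda>x. x * _"] sum.delta cong: if_cong)
      ultimately show ?thesis by (simp add: eq_neg_iff_add_eq_0)
    qed
    have "(N0 * d) $$ (m, 0) = 1" using N0d n by (simp add: en_def)
    moreover have "(N0 * d) $$ (m, 0) = (\<Sum>l\<in>{0..<m}. hconj q (zf l) * dd l) + S * dd m"
      using rowi[of m] n by (simp add: nf_def)
    moreover have "(\<Sum>l\<in>{0..<m}. hconj q (zf l) * dd l) = - (S * dd m)"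
      unfolding S_def by (simp add: dl algebra_simps sum_negf sum_distrib_left)
    ultimately show False by simp
  qed
  have Keq: "mQ * K c * Q = N + c \<cdot>\<^sub>m (v * mstar q v)" for c
  proof -
    have "mQ * K c = mQ * N0 + c \<cdot>\<^sub>m (mQ * EE)"
      unfolding Kdec using mult_add_distrib_mat[OF mQc N0c smult_carrier_mat[OF EEc]] mult_smult_distrib[OF mQc EEc]
      by simp
    then have "mQ * K c * Q = mQ * N0 * Q + c \<cdot>\<^sub>m (mQ * EE * Q)"
      using add_mult_distrib_mat[OF mult_carrier_mat[OF mQc N0c] smult_carrier_mat[OF mult_carrier_mat[OF mQc EEc]] Qc]
        mult_smult_assoc_mat[OF mult_carrier_mat[OF mQc EEc] Qc] by simp
    moreover have "v * mstar q v = mQ * EE * Q"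
    proof -
      have men: "mstar q en \<in> carrier_mat 1 n" using enc by simp
      have "v * mstar q v = mQ * en * (mstar q en * Q)"
        unfolding v_def mstar_mult[OF card mQc enc] mmQ ..
      also have "\<dots> = mQ * (en * (mstar q en * Q))" by (rule assoc_mult_mat[OF mQc enc mult_carrier_mat[OF men Qc]])
      also have "en * (mstar q en * Q) = EE * Q" unfolding EE_def by (rule assoc_mult_mat[OF enc men Qc, symmetric])
      also have "mQ * (EE * Q) = mQ * EE * Q" by (rule assoc_mult_mat[OF mQc EEc Qc, symmetric])
      finally show ?thesis .
    qed
    ultimately show ?thesis unfolding N_def by simp
  qed
  define nrm where "nrm = yn * hconj q yn"
  have nrm0: "nrm \<noteq> 0" unfolding nrm_def using yn0' hconj_eq_0_iff[OF card] by simp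
  have hnrm: "hconj q nrm = nrm" unfolding nrm_def by (simp add: hconj_mult[OF card] hconj_hconj[OF card])
  have cF: "inverse (lam * nrm) \<in> Fq q" if "lam \<in> Fq q" for lam
    using that hnrm by (simp add: Fq_def hconj_inverse[OF card] hconj_mult[OF card])
  have nrm_eq: "lam * yn * hconj q yn = lam * nrm" for lam unfolding nrm_def by (simp add: mult.assoc)
  have seteq: "{minv (P * E * mstar q P + lam \<cdot>\<^sub>m (P * Y * mstar q (P * Y))) | lam. lam \<in> Fq q \<and> lam \<noteq> 0}
      = leaf q N v"
  proof (rule Set.set_eqI, rule iffI)
    fix X assume "X \<in> {minv (P * E * mstar q P + lam \<cdot>\<^sub>m (P * Y * mstar q (P * Y))) | lam. lam \<in> Fq q \<and> lam \<noteq> 0}"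
    then obtain lam where lam: "lam \<in> Fq q" "lam \<noteq> 0" and X: "X = minv (P * E * mstar q P + lam \<cdot>\<^sub>m (P * Y * mstar q (P * Y)))"
      by blast
    have "X = N + inverse (lam * nrm) \<cdot>\<^sub>m (v * mstar q v)"
      unfolding X part_a[OF lam(2)] Keq nrm_eq ..
    moreover have "inverse (lam * nrm) \<in> Fq q" "inverse (lam * nrm) \<noteq> 0" using cF[OF lam(1)] lam(2) nrm0 by auto
    ultimately show "X \<in> leaf q N v" unfolding leaf_def by blast
  next
    fix X assume "X \<in> leaf q N v"
    then obtain mu where mu: "mu \<in> Fq q" "mu \<noteq> 0" and X: "X = N + mu \<cdot>\<^sub>m (v * mstar q v)"
      unfolding leaf_def by blast
    define lam where "lam = inverse (mu * nrm)"
    have lam: "lam \<in> Fq q" "lam \<noteq> 0" using cF[OF mu(1)] mu(2) nrm0 by (auto simp: lam_def)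
    have "inverse (lam * nrm) = mu" using nrm0 by (simp add: lam_def)
    then have "X = minv (P * E * mstar q P + lam \<cdot>\<^sub>m (P * Y * mstar q (P * Y)))"
      unfolding X part_a[OF lam(2)] Keq nrm_eq by simp
    then show "X \<in> {minv (P * E * mstar q P + lam \<cdot>\<^sub>m (P * Y * mstar q (P * Y))) | lam. lam \<in> Fq q \<and> lam \<noteq> 0}"
      using lam by blast
  qed
  show ?thesis
  proof (intro conjI ballI impI)
    fix lam :: 'a assume lam: "lam \<in> Fq q" "lam \<noteq> 0"
    show "minv (P * E * mstar q P + lam \<cdot>\<^sub>m (P * Y * mstar q (P * Y))) =
        mstar q (minv P) * four_block_mat (1\<^sub>m (n - 1)) z (mstar q z)
          (mstar q z * z + inverse (lam * yn * hconj q yn) \<cdot>\<^sub>m 1\<^sub>m 1) * minv P"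
      using part_a[OF lam(2)] by (simp add: K_def mQ_def Q_def n)
  next
    assume "3 \<le> q"
    have Nf: "mstar q (minv P) * four_block_mat (1\<^sub>m (n - 1)) z (mstar q z) (mstar q z * z) * minv P = N"
      by (simp add: N_def mQ_def Q_def N0_def n)
    have vf: "mstar q (minv P) * mat n 1 (\<lambda>(i, j). if i = n - 1 then 1 else 0) = v"
      by (simp add: v_def mQ_def Q_def en_def n)
    show "is_leaf q n (mstar q (minv P) * four_block_mat (1\<^sub>m (n - 1)) z (mstar q z) (mstar q z * z) * minv P)
        (mstar q (minv P) * mat n 1 (\<lambda>(i, j). if i = n - 1 then 1 else 0))
        {minv (P * E * mstar q P + lam \<cdot>\<^sub>m (P * Y * mstar q (P * Y))) | lam. lam \<in> Fq q \<and> lam \<noteq> 0}"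
      unfolding Nf vf is_leaf_def using Nc Nh rankN vc notcol seteq by blast
  qed
qed



lemma part2:
  fixes D w :: "'a mat" and mu :: 'a and m :: nat
  assumes D: "D \<in> carrier_mat m m" and Dinv: "invertible_mat D" and Dh: "hermitian q D"
    and w: "w \<in> carrier_mat m 1"
  defines "M \<equiv> four_block_mat (mat 1 1 (\<lambda>_. mu)) (mstar q w) w D"
    and "s \<equiv> (mstar q w * minv D * w) $$ (0,0)"
    and "u \<equiv> mat 1 1 (\<lambda>_. - 1) @\<^sub>r (minv D * w)"
  shows "(invertible_mat M \<longleftrightarrow> mu \<noteq> s) \<and>
    (mu \<noteq> s \<longrightarrow> minv M = four_block_mat (0\<^sub>m 1 1) (0\<^sub>m 1 m) (0\<^sub>m m 1) (minv D)
                       + inverse (mu - s) \<cdot>\<^sub>m (u * mstar q u))"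
proof -
  let ?Di = "minv D"
  have Di: "?Di \<in> carrier_mat m m" "D * ?Di = 1\<^sub>m m" "?Di * D = 1\<^sub>m m"
    using minv_props[OF D Dinv] by auto
  have DiH: "mstar q ?Di = ?Di"
  proof -
    have "mstar q (?Di * D) = mstar q D * mstar q ?Di" by (rule mstar_mult[OF card Di(1) D])
    then have "mstar q D * mstar q ?Di = 1\<^sub>m m" using Di(3) by (simp add: mstar_one[OF card])
    then have "D * mstar q ?Di = 1\<^sub>m m" using Dh by (simp add: hermitian_def)
    then have "minv D = mstar q ?Di" by (rule minv_eq[OF D mstar_carrier[OF Di(1)]])
    then show ?thesis by simp
  qed
  define v where "v = ?Di * w"
  have v: "v \<in> carrier_mat m 1" using Di w by (simp add: v_def)
  have sv: "s = (mstar q w * v) $$ (0,0)" unfolding s_def v_def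
    using Di w assoc_mult_mat[OF mstar_carrier[OF w] Di(1) w] by simp
  have mv: "mstar q v = mstar q w * ?Di" using mstar_mult[OF card Di(1) w] DiH by (simp add: v_def)
  have Dv: "D * v = w" unfolding v_def using assoc_mult_mat[OF D Di(1) w] Di(2) w by simp
  have u: "u = four_block_mat (mat 1 1 (\<lambda>_. - 1)) (0\<^sub>m 1 0) v (0\<^sub>m m 0)"
    unfolding u_def append_rows_def v_def using Di w by simp
  have mw: "mstar q w \<in> carrier_mat 1 m" using mstar_carrier[OF w] .
  have Mc: "M \<in> carrier_mat (1+m) (1+m)" unfolding M_def by (rule four_block_carrier_mat[OF _ D]) simp
  have uc: "u \<in> carrier_mat (1+m) 1" unfolding u using four_block_carrier_mat[of "mat 1 1 (\<lambda>_. - 1)" 1 1 "0\<^sub>m m 0" m 0] v by simp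
  have b1: "mat 1 1 (\<lambda>_. mu) * mat 1 1 (\<lambda>_. - 1) + mstar q w * v = mat 1 1 (\<lambda>_. s - mu)"
    by (rule eq_matI) (use mw v in \<open>auto simp: sv scalar_prod_def\<close>)
  have b2: "mat 1 1 (\<lambda>_. mu) * 0\<^sub>m 1 0 + mstar q w * 0\<^sub>m m 0 = 0\<^sub>m 1 0"
    by (rule eq_matI) (use mw in auto)
  have b3: "w * mat 1 1 (\<lambda>_. - 1) + D * v = 0\<^sub>m m 1"
    by (rule eq_matI) (use w in \<open>auto simp: Dv scalar_prod_def\<close>)
  have b4: "w * 0\<^sub>m 1 0 + D * 0\<^sub>m m 0 = 0\<^sub>m m 0"
    by (rule eq_matI) (use w D in auto)
  have Mu: "M * u = four_block_mat (mat 1 1 (\<lambda>_. s - mu)) (0\<^sub>m 1 0) (0\<^sub>m m 1) (0\<^sub>m m 0)"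
    unfolding M_def u
    by (subst mult_four_block_mat[OF _ mw w D _ zero_carrier_mat v zero_carrier_mat], simp, simp)
       (intro cong_four_block_mat b1 b2 b3 b4)
  have cmu: "mat 1 1 (\<lambda>_. mu) \<in> carrier_mat 1 1" by simp
  have cm1: "mat 1 1 (\<lambda>_. - 1 :: 'a) \<in> carrier_mat 1 1" by simp
  have uz: "u $$ (0,0) = -1" unfolding u by simp
  have muc: "mstar q u \<in> carrier_mat 1 (1+m)" using mstar_carrier[OF uc] .
  show ?thesis
  proof (cases "mu = s")
    case True
    have Mu0: "M * u = 0\<^sub>m (1+m) 1"
      unfolding Mu True by (rule eq_matI) auto
    have "\<not> invertible_mat M"
    proof
      assume "invertible_mat M"
      from minv_props[OF Mc this] have Mi: "minv M \<in> carrier_mat (1+m) (1+m)" "minv M * M = 1\<^sub>m (1+m)"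
        by auto
      have "u = 1\<^sub>m (1+m) * u" using uc by simp
      also have "\<dots> = (minv M * M) * u" by (simp only: Mi(2))
      also have "\<dots> = minv M * (M*u)" by (rule assoc_mult_mat[OF Mi(1) Mc uc])
      also have "\<dots> = 0\<^sub>m (1+m) 1" using Mu0 Mi by simp
      finally have "u $$ (0,0) = 0" by simp
      with uz show False by simp
    qed
    then show ?thesis using True by simp
  next
    case False
    define k where "k = inverse (mu - s)"
    define B0 where "B0 = four_block_mat (0\<^sub>m 1 1) (0\<^sub>m 1 m) (0\<^sub>m m 1) ?Di"
    define X where "X = B0 + k \<cdot>\<^sub>m (u * mstar q u)"
    have B0c: "B0 \<in> carrier_mat (1+m) (1+m)" unfolding B0_def
      using four_block_carrier_mat[of "0\<^sub>m 1 1" 1 1 ?Di m m] Di by simp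
    have uuc: "u * mstar q u \<in> carrier_mat (1+m) (1+m)" using uc muc by simp
    have Xc: "X \<in> carrier_mat (1+m) (1+m)" unfolding X_def using B0c uuc by simp
    have MX1: "M * X = M * B0 + k \<cdot>\<^sub>m ((M * u) * mstar q u)"
      unfolding X_def
      using mult_add_distrib_mat[OF Mc B0c smult_carrier_mat[OF uuc]] mult_smult_distrib[OF Mc uuc]
        assoc_mult_mat[OF Mc uc muc] by simp
    have MB0: "M * B0 = four_block_mat (0\<^sub>m 1 1) (mstar q w * ?Di) (0\<^sub>m m 1) (1\<^sub>m m)"
    proof -
      have e1: "mat 1 1 (\<lambda>_. mu) * 0\<^sub>m 1 1 + mstar q w * 0\<^sub>m m 1 = 0\<^sub>m 1 1"
        by (rule eq_matI) (use mw in \<open>auto simp: scalar_prod_def\<close>)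
      have e2: "mat 1 1 (\<lambda>_. mu) * 0\<^sub>m 1 m + mstar q w * ?Di = mstar q w * ?Di"
        by (rule eq_matI) (use mw Di in \<open>auto simp: scalar_prod_def\<close>)
      have e3: "w * 0\<^sub>m 1 1 + D * 0\<^sub>m m 1 = 0\<^sub>m m 1"
        by (rule eq_matI) (use w D in \<open>auto simp: scalar_prod_def\<close>)
      have e4: "w * 0\<^sub>m 1 m + D * ?Di = 1\<^sub>m m"
        by (rule eq_matI) (use w D Di in auto)
      show ?thesis unfolding M_def B0_def
        by (subst mult_four_block_mat[OF cmu mw w D zero_carrier_mat zero_carrier_mat zero_carrier_mat Di(1)])
           (intro cong_four_block_mat e1 e2 e3 e4)
    qed
    have mu': "mstar q u = four_block_mat (mat 1 1 (\<lambda>_. - 1)) (mstar q v) (0\<^sub>m 0 1) (0\<^sub>m 0 m)"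
    proof -
      have "mstar q (mat 1 1 (\<lambda>_. - 1 :: 'a)) = mat 1 1 (\<lambda>_. - 1)"
        by (rule eq_matI) (auto simp: hconj_uminus[OF card] hconj_1[OF card])
      then show ?thesis unfolding u
        by (subst mstar_four_block[OF card cm1 zero_carrier_mat v zero_carrier_mat])
           (simp add: mstar_zero[OF card])
    qed
    have mvc: "mstar q v \<in> carrier_mat 1 m" using mstar_carrier[OF v] .
    have Muu: "(M * u) * mstar q u = four_block_mat (mat 1 1 (\<lambda>_. mu - s)) ((s - mu) \<cdot>\<^sub>m mstar q v) (0\<^sub>m m 1) (0\<^sub>m m m)"
    proof -
      have f1: "mat 1 1 (\<lambda>_. s - mu) * mat 1 1 (\<lambda>_. - 1) + 0\<^sub>m 1 0 * 0\<^sub>m 0 1 = mat 1 1 (\<lambda>_. mu - s)"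
        by (rule eq_matI) (auto simp: scalar_prod_def)
      have f2: "mat 1 1 (\<lambda>_. s - mu) * mstar q v + 0\<^sub>m 1 0 * 0\<^sub>m 0 m = (s - mu) \<cdot>\<^sub>m mstar q v"
        by (rule eq_matI) (use mvc v in \<open>auto simp: scalar_prod_def carrier_matD\<close>)
      have f3: "0\<^sub>m m 1 * mat 1 1 (\<lambda>_. - 1) + 0\<^sub>m m 0 * 0\<^sub>m 0 1 = (0\<^sub>m m 1 :: 'a mat)"
        by (rule eq_matI) auto
      have f4: "0\<^sub>m m 1 * mstar q v + 0\<^sub>m m 0 * 0\<^sub>m 0 m = (0\<^sub>m m m :: 'a mat)"
        by (rule eq_matI) (use mvc v in \<open>auto simp: scalar_prod_def carrier_matD\<close>)
      show ?thesis unfolding Mu mu'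
        by (subst mult_four_block_mat[OF _ zero_carrier_mat zero_carrier_mat zero_carrier_mat cm1 mvc zero_carrier_mat zero_carrier_mat])
           (simp, intro cong_four_block_mat f1 f2 f3 f4)
    qed
    have ks: "k * (mu - s) = 1" using False by (simp add: k_def)
    have MX: "M * X = 1\<^sub>m (1+m)"
    proof -
      have g1: "0\<^sub>m 1 1 + k \<cdot>\<^sub>m mat 1 1 (\<lambda>_. mu - s) = 1\<^sub>m 1"
        by (rule eq_matI) (auto simp: ks)
      have g2: "mstar q w * ?Di + k \<cdot>\<^sub>m ((s - mu) \<cdot>\<^sub>m mstar q v) = 0\<^sub>m 1 m"
      proof (rule eq_matI)
        fix i j assume "i < dim_row (0\<^sub>m 1 m :: 'a mat)" "j < dim_col (0\<^sub>m 1 m :: 'a mat)"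
        then have ij: "i < 1" "j < m" by auto
        have kn: "k * (s - mu) = -1" using ks by (simp add: algebra_simps)
        define G where "G = mstar q w * ?Di"
        have Gc: "G \<in> carrier_mat 1 m" unfolding G_def using mw Di by simp
        have "(G + k \<cdot>\<^sub>m ((s - mu) \<cdot>\<^sub>m G)) $$ (i,j) = G $$ (i,j) + (k * (s - mu)) * G $$ (i,j)"
          using Gc ij by (simp add: mult.assoc)
        also have "\<dots> = 0" using kn by simp
        finally show "(mstar q w * ?Di + k \<cdot>\<^sub>m ((s - mu) \<cdot>\<^sub>m mstar q v)) $$ (i,j) = 0\<^sub>m 1 m $$ (i,j)"
          using ij by (simp add: mv G_def)
      qed (use mw Di v in auto)
      have g3: "0\<^sub>m m 1 + k \<cdot>\<^sub>m 0\<^sub>m m 1 = (0\<^sub>m m 1 :: 'a mat)" by simp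
      have g4: "1\<^sub>m m + k \<cdot>\<^sub>m 0\<^sub>m m m = (1\<^sub>m m :: 'a mat)" by simp
      have "M * X = four_block_mat (0\<^sub>m 1 1) (mstar q w * ?Di) (0\<^sub>m m 1) (1\<^sub>m m)
          + four_block_mat (k \<cdot>\<^sub>m mat 1 1 (\<lambda>_. mu - s)) (k \<cdot>\<^sub>m ((s - mu) \<cdot>\<^sub>m mstar q v)) (k \<cdot>\<^sub>m 0\<^sub>m m 1) (k \<cdot>\<^sub>m 0\<^sub>m m m)"
        unfolding MX1 MB0 Muu
        by (subst smult_four_block_mat[of _ 1 1 _ m]) (use mvc in auto)
      also have "\<dots> = four_block_mat (1\<^sub>m 1) (0\<^sub>m 1 m) (0\<^sub>m m 1) (1\<^sub>m m)"
        by (subst add_four_block_mat[of _ 1 1 _ m _ m]) (use mw Di mvc g1 g2 g3 g4 in auto)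
      also have "\<dots> = 1\<^sub>m (1+m)" by (rule four_block_one_mat)
      finally show ?thesis .
    qed
    have XM: "X * M = 1\<^sub>m (1+m)" by (rule mat_mult_left_right_inverse[OF Mc Xc MX])
    have inv: "invertible_mat M" unfolding invertible_mat_def inverts_mat_def
      using Mc Xc MX XM by (intro conjI exI[of _ X]) auto
    have "minv M = X" by (rule minv_eq[OF Mc Xc MX])
    then show ?thesis using False inv by (simp add: X_def B0_def k_def)
  qed
qed


end

theorem lemma3p1:
  fixes q n :: nat and P Y D w :: "'a::{field,finite} mat" and mu :: 'a
  assumes card: "card (UNIV :: 'a set) = q ^ 2"
    and n2: "n \<ge> 2"
  shows
   "(P \<in> carrier_mat n n \<longrightarrow> invertible_mat P \<longrightarrow>
       Y \<in> carrier_mat n 1 \<longrightarrow> Y $$ (n - 1, 0) \<noteq> 0 \<longrightarrow>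
       (let A = P * mat n n (\<lambda>(i, j). if i = j \<and> i < n - 1 then 1 else 0) * mstar q P;
            x = P * Y;
            yn = Y $$ (n - 1, 0);
            z = mat (n - 1) 1 (\<lambda>(i, j). - (Y $$ (i, 0)) / yn);
            N = mstar q (minv P) * four_block_mat (1\<^sub>m (n - 1)) z (mstar q z) (mstar q z * z)
                  * minv P;
            v = mstar q (minv P) * mat n 1 (\<lambda>(i, j). if i = n - 1 then 1 else 0)
        in (\<forall>lam \<in> Fq q. lam \<noteq> 0 \<longrightarrow>
              minv (A + lam \<cdot>\<^sub>m (x * mstar q x)) =
                mstar q (minv P) *
                four_block_mat (1\<^sub>m (n - 1)) z (mstar q z)
                  (mstar q z * z + inverse (lam * yn * hconj q yn) \<cdot>\<^sub>m 1\<^sub>m 1)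
                * minv P)
           \<and> (q \<ge> 3 \<longrightarrow>
                is_leaf q n N v {minv (A + lam \<cdot>\<^sub>m (x * mstar q x)) | lam. lam \<in> Fq q \<and> lam \<noteq> 0})))
  \<and> (D \<in> carrier_mat (n - 1) (n - 1) \<longrightarrow> invertible_mat D \<longrightarrow> hermitian q D \<longrightarrow>
       w \<in> carrier_mat (n - 1) 1 \<longrightarrow> mu \<in> Fq q \<longrightarrow>
       (let M = four_block_mat (mat 1 1 (\<lambda>_. mu)) (mstar q w) w D;
            s = (mstar q w * minv D * w) $$ (0, 0);
            u = mat 1 1 (\<lambda>_. - 1) @\<^sub>r (minv D * w)
        in (invertible_mat M \<longleftrightarrow> mu \<noteq> s) \<and>
           (mu \<noteq> s \<longrightarrow>
              minv M = four_block_mat (0\<^sub>m 1 1) (0\<^sub>m 1 (n - 1)) (0\<^sub>m (n - 1) 1) (minv D)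
                       + inverse (mu - s) \<cdot>\<^sub>m (u * mstar q u))))"
  proof (intro conjI impI)
  assume P: "P \<in> carrier_mat n n" and Pinv: "invertible_mat P" and Y: "Y \<in> carrier_mat n 1"
    and yn0: "Y $$ (n - 1, 0) \<noteq> 0"
  show "let A = P * mat n n (\<lambda>(i, j). if i = j \<and> i < n - 1 then 1 else 0) * mstar q P;
            x = P * Y;
            yn = Y $$ (n - 1, 0);
            z = mat (n - 1) 1 (\<lambda>(i, j). - (Y $$ (i, 0)) / yn);
            N = mstar q (minv P) * four_block_mat (1\<^sub>m (n - 1)) z (mstar q z) (mstar q z * z)
                  * minv P;
            v = mstar q (minv P) * mat n 1 (\<lambda>(i, j). if i = n - 1 then 1 else 0)
        in (\<forall>lam \<in> Fq q. lam \<noteq> 0 \<longrightarrow>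
              minv (A + lam \<cdot>\<^sub>m (x * mstar q x)) =
                mstar q (minv P) *
                four_block_mat (1\<^sub>m (n - 1)) z (mstar q z)
                  (mstar q z * z + inverse (lam * yn * hconj q yn) \<cdot>\<^sub>m 1\<^sub>m 1)
                * minv P)
           \<and> (q \<ge> 3 \<longrightarrow>
                is_leaf q n N v {minv (A + lam \<cdot>\<^sub>m (x * mstar q x)) | lam. lam \<in> Fq q \<and> lam \<noteq> 0})"
    unfolding Let_def using n2 by (intro part1[OF card _ P Pinv Y yn0]) simp
next
  assume D: "D \<in> carrier_mat (n - 1) (n - 1)" and Dinv: "invertible_mat D" and Dh: "hermitian q D"
    and w: "w \<in> carrier_mat (n - 1) 1" and mu: "mu \<in> Fq q"
  show "let M = four_block_mat (mat 1 1 (\<lambda>_. mu)) (mstar q w) w D;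
            s = (mstar q w * minv D * w) $$ (0, 0);
            u = mat 1 1 (\<lambda>_. - 1) @\<^sub>r (minv D * w)
        in (invertible_mat M \<longleftrightarrow> mu \<noteq> s) \<and>
           (mu \<noteq> s \<longrightarrow>
              minv M = four_block_mat (0\<^sub>m 1 1) (0\<^sub>m 1 (n - 1)) (0\<^sub>m (n - 1) 1) (minv D)
                       + inverse (mu - s) \<cdot>\<^sub>m (u * mstar q u))"
    unfolding Let_def by (rule part2[OF card D Dinv Dh w])
qed

end
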